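(* Let $(\mathbf{L},\mathbf{R})\in\mathcal{P}_{\mathsf N}$ be centered and suppose it admits a dominance map. Then $\mathbf{L}\preceq^{\mathrm{PC}}\mathbf{R}$, i.e. $v\mathbf{L}\preceq v\mathbf{R}$ for every $v\in\mathbb{R}_+^{\mathsf N+1}$.
   Context: $\mathcal{P}_{\mathsf N}$ denotes the set of pairs $(\mathbf{L},\mathbf{R})$ of $(0,1)$-matrices, $\mathbf{L}$ of size $(\mathsf N+1)\times m_L$ and $\mathbf{R}$ of size $(\mathsf N+1)\times m_R$, such that some index $p\in[\mathsf N+1]$ has row $p$ of $\mathbf{L}$ and row $p$ of $\mathbf{R}$ both zero. $\mathbf{A}_{(i)}$ is the $i$-th row; $e$ the all-ones row vector; $|v|=\sum_k|v_k|$; $\le$ between vectors is componentwise. The pair is centered if it is balanced ($|\mathbf{L}_{(i)}|=|\mathbf{R}_{(i)}|$ for all $i$) and some row satisfies $\mathbf{L}_{(i)}=e=\mathbf{R}_{(i)}$ (so $m_L=m_R=m$). A dominance map is $f:\{0,1\}^{m}\to\{0,1\}^{m}$ with $|u|=|f(u)|$ and $\mathbf{L}u^T\le\mathbf{R}f(u)^T$ for all $u$. For $x,y\in\mathbb{R}^d$, $x\preceq y$ (majorization) means $\sum_{n=1}^k x^\downarrow_n\le\sum_{n=1}^k y^\downarrow_n$ for $k=1,\dots,d-1$ and $\sum_{n=1}^d x_n=\sum_{n=1}^d y_n$, where $x^\downarrow_n$ is the $n$-th largest component. $\mathbb{R}_+$ denotes the nonnegative reals, and $v$ is a row vector. *)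

theory Defs
  imports Complex_Main
begin

text \<open>Matrices are functions nat => nat => real; a matrix with n rows and m columns
  only uses the entries A i j with i < n, j < m.  Row vectors are nat => real
  (entries with index < length used).  Rows are indexed 0..N (i.e. N+1 rows).\<close>

definition zero_one_matrix :: "nat \<Rightarrow> nat \<Rightarrow> (nat \<Rightarrow> nat \<Rightarrow> real) \<Rightarrow> bool" where
  "zero_one_matrix n m A \<longleftrightarrow> (\<forall>i<n. \<forall>j<m. A i j = 0 \<or> A i j = 1)"

definition row_norm :: "nat \<Rightarrow> (nat \<Rightarrow> nat \<Rightarrow> real) \<Rightarrow> nat \<Rightarrow> real" where
  "row_norm m A i = (\<Sum>j<m. \<bar>A i j\<bar>)"

definition in_P :: "nat \<Rightarrow> nat \<Rightarrow> nat \<Rightarrow> (nat \<Rightarrow> nat \<Rightarrow> real) \<Rightarrow> (nat \<Rightarrow> nat \<Rightarrow> real) \<Rightarrow> bool" where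
  "in_P N mL mR L R \<longleftrightarrow> zero_one_matrix (N+1) mL L \<and> zero_one_matrix (N+1) mR R \<and>
     (\<exists>p<N+1. (\<forall>j<mL. L p j = 0) \<and> (\<forall>j<mR. R p j = 0))"

definition balanced :: "nat \<Rightarrow> nat \<Rightarrow> nat \<Rightarrow> (nat \<Rightarrow> nat \<Rightarrow> real) \<Rightarrow> (nat \<Rightarrow> nat \<Rightarrow> real) \<Rightarrow> bool" where
  "balanced N mL mR L R \<longleftrightarrow> (\<forall>i<N+1. row_norm mL L i = row_norm mR R i)"

definition centered :: "nat \<Rightarrow> nat \<Rightarrow> nat \<Rightarrow> (nat \<Rightarrow> nat \<Rightarrow> real) \<Rightarrow> (nat \<Rightarrow> nat \<Rightarrow> real) \<Rightarrow> bool" where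
  "centered N mL mR L R \<longleftrightarrow> balanced N mL mR L R \<and> mL = mR \<and>
     (\<exists>i<N+1. (\<forall>j<mL. L i j = 1) \<and> (\<forall>j<mR. R i j = 1))"

text \<open>{0,1}^m, as functions vanishing outside {0..<m}.\<close>
definition binvecs :: "nat \<Rightarrow> (nat \<Rightarrow> real) set" where
  "binvecs m = {u. (\<forall>j<m. u j = 0 \<or> u j = 1) \<and> (\<forall>j\<ge>m. u j = 0)}"

definition vnorm :: "nat \<Rightarrow> (nat \<Rightarrow> real) \<Rightarrow> real" where
  "vnorm m u = (\<Sum>j<m. \<bar>u j\<bar>)"

definition mat_vec :: "nat \<Rightarrow> (nat \<Rightarrow> nat \<Rightarrow> real) \<Rightarrow> (nat \<Rightarrow> real) \<Rightarrow> nat \<Rightarrow> real" where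
  "mat_vec m A u i = (\<Sum>j<m. A i j * u j)"

definition dominance_map :: "nat \<Rightarrow> nat \<Rightarrow> (nat \<Rightarrow> nat \<Rightarrow> real) \<Rightarrow> (nat \<Rightarrow> nat \<Rightarrow> real)
    \<Rightarrow> ((nat \<Rightarrow> real) \<Rightarrow> (nat \<Rightarrow> real)) \<Rightarrow> bool" where
  "dominance_map N m L R f \<longleftrightarrow> (\<forall>u\<in>binvecs m. f u \<in> binvecs m \<and> vnorm m u = vnorm m (f u) \<and>
      (\<forall>i<N+1. mat_vec m L u i \<le> mat_vec m R (f u) i))"

definition majorized :: "real list \<Rightarrow> real list \<Rightarrow> bool" where
  "majorized xs ys \<longleftrightarrow> length xs = length ys \<and>
     (\<forall>k\<in>{1..<length xs}. sum_list (take k (rev (sort xs))) \<le> sum_list (take k (rev (sort ys)))) \<and>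
     sum_list xs = sum_list ys"

definition vec_mat :: "nat \<Rightarrow> nat \<Rightarrow> (nat \<Rightarrow> real) \<Rightarrow> (nat \<Rightarrow> nat \<Rightarrow> real) \<Rightarrow> real list" where
  "vec_mat N m v A = map (\<lambda>j. \<Sum>i<N+1. v i * A i j) [0..<m]"

end

theory Submission imports Defs "HOL-Combinatorics.List_Permutation" begin

lemma desc_nth: assumes "i \<le> j" "j < length ys"
  shows "rev (sort ys) ! j \<le> rev (sort ys) ! i"
proof -
  have s: "sorted (sort ys)" by simp
  have l: "length (sort ys) = length ys" by simp
  show ?thesis using assms
    by (simp add: rev_nth sorted_nth_mono[OF s])
qed

lemma sum_take_nth: "k \<le> length zs \<Longrightarrow> sum_list (take k zs) = (\<Sum>i<k. zs ! i)"
  by (induction k) (auto simp: take_Suc_conv_app_nth)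

lemma desc_sum_le:
  fixes zs :: "real list"
  assumes desc: "\<And>i j. i \<le> j \<Longrightarrow> j < length zs \<Longrightarrow> zs ! j \<le> zs ! i"
    and T: "T \<subseteq> {..<length zs}" "card T = k"
  shows "(\<Sum>j\<in>T. zs ! j) \<le> (\<Sum>i<k. zs ! i)"
proof -
  have fT: "finite T" using T finite_subset by blast
  define A where "A = T - {..<k}"
  define B where "B = {..<k} - T"
  have cAB: "card A = card B"
  proof -
    have "card T = card (T \<inter> {..<k}) + card A" unfolding A_def
      using fT by (metis Diff_Diff_Int card_Diff_subset_Int finite_Diff Int_commute add.commute card_Int_Diff finite_lessThan inf.commute)
    moreover have "k = card (T \<inter> {..<k}) + card B" unfolding B_def
      by (metis card_Int_Diff card_lessThan finite_lessThan inf.commute)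
    ultimately show ?thesis using T by simp
  qed
  have fA: "finite A" "finite B" unfolding A_def B_def using fT by auto
  obtain h where h: "bij_betw h A B" using finite_same_card_bij[OF fA cAB] by blast
  have "(\<Sum>j\<in>A. zs ! j) \<le> (\<Sum>j\<in>A. zs ! (h j))"
  proof (rule sum_mono)
    fix j assume j: "j \<in> A"
    then have "h j \<in> B" using h bij_betwE by blast
    then have "h j \<le> j" "j < length zs" using j T unfolding A_def B_def by auto
    then show "zs ! j \<le> zs ! (h j)" using desc by blast
  qed
  also have "\<dots> = (\<Sum>j\<in>B. zs ! j)" using sum.reindex_bij_betw[OF h] .
  finally have AB: "(\<Sum>j\<in>A. zs ! j) \<le> (\<Sum>j\<in>B. zs ! j)" .
  have "(\<Sum>j\<in>T. zs ! j) = (\<Sum>j\<in>T \<inter> {..<k}. zs ! j) + (\<Sum>j\<in>A. zs ! j)"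
    unfolding A_def using sum.Int_Diff[OF fT, of _ "{..<k}"] by simp
  moreover have "(\<Sum>i<k. zs ! i) = (\<Sum>j\<in>T \<inter> {..<k}. zs ! j) + (\<Sum>j\<in>B. zs ! j)"
    unfolding B_def using sum.Int_Diff[of "{..<k}" _ T] by (simp add: Int_commute)
  ultimately show ?thesis using AB by simp
qed

lemma topk_ge:
  fixes ys :: "real list"
  assumes "S \<subseteq> {..<length ys}" "card S = k"
  shows "(\<Sum>j\<in>S. ys!j) \<le> sum_list (take k (rev (sort ys)))"
proof -
  define zs where "zs = rev (sort ys)"
  have "mset ys = mset zs" unfolding zs_def by simp
  then obtain g where g: "bij_betw g {..<length ys} {..<length zs}" "\<forall>i<length ys. ys ! i = zs ! (g i)"
    using permutation_Ex_bij by blast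
  have lz: "length zs = length ys" unfolding zs_def by simp
  have fS: "finite S" using assms finite_subset by blast
  have inj: "inj_on g S" using g(1) assms(1) bij_betw_imp_inj_on inj_on_subset by blast
  have "(\<Sum>j\<in>S. ys!j) = (\<Sum>j\<in>S. zs ! (g j))" using g(2) assms(1) by (intro sum.cong) auto
  also have "\<dots> = (\<Sum>j\<in>g ` S. zs ! j)" by (simp add: sum.reindex[OF inj])
  also have "\<dots> \<le> (\<Sum>i<k. zs ! i)"
  proof (rule desc_sum_le)
    show "\<And>i j. i \<le> j \<Longrightarrow> j < length zs \<Longrightarrow> zs ! j \<le> zs ! i"
      unfolding zs_def using desc_nth by simp
    show "g ` S \<subseteq> {..<length zs}" using g(1) assms(1) bij_betw_imp_surj_on by blast
    show "card (g ` S) = k" using card_image[OF inj] assms by simp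
  qed
  also have "\<dots> = sum_list (take k zs)"
  proof -
    have "k \<le> length zs" using assms card_mono[of "{..<length ys}" S] lz by simp
    then show ?thesis by (simp add: sum_take_nth)
  qed
  finally show ?thesis unfolding zs_def .
qed

lemma topk_attained:
  fixes xs :: "real list"
  assumes "k \<le> length xs"
  shows "\<exists>S \<subseteq> {..<length xs}. card S = k \<and> sum_list (take k (rev (sort xs))) = (\<Sum>j\<in>S. xs!j)"
proof -
  define zs where "zs = rev (sort xs)"
  have "mset zs = mset xs" unfolding zs_def by simp
  then obtain g where g: "bij_betw g {..<length zs} {..<length xs}" "\<forall>i<length zs. zs ! i = xs ! (g i)"
    using permutation_Ex_bij by blast
  have lz: "length zs = length xs" unfolding zs_def by simp
  have inj: "inj_on g {..<k}" using g(1) assms lz bij_betw_imp_inj_on inj_on_subset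
    by (metis lessThan_subset_iff)
  have "sum_list (take k zs) = (\<Sum>i<k. zs ! i)" using assms lz by (simp add: sum_take_nth)
  also have "\<dots> = (\<Sum>i<k. xs ! (g i))" using g(2) assms lz by (intro sum.cong) auto
  also have "\<dots> = (\<Sum>j\<in>g ` {..<k}. xs ! j)" by (simp add: sum.reindex[OF inj])
  finally have e: "sum_list (take k zs) = (\<Sum>j\<in>g ` {..<k}. xs ! j)" .
  have sub: "g ` {..<k} \<subseteq> {..<length xs}" using g(1) assms lz bij_betw_imp_surj_on
    by (metis image_mono lessThan_subset_iff)
  show ?thesis using e sub card_image[OF inj] unfolding zs_def by auto
qed


lemma swap_lemma:
  "(\<Sum>j<m. u j * (\<Sum>i<n. v i * A i j)) = (\<Sum>i<n. v i * mat_vec m A u i)"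
  unfolding mat_vec_def
  by (simp add: sum_distrib_left sum_distrib_right sum.swap[of _ "{..<m}"] mult_ac)

lemma vec_mat_len: "length (vec_mat N m v A) = m" unfolding vec_mat_def by simp

lemma vec_mat_nth: "j < m \<Longrightarrow> vec_mat N m v A ! j = (\<Sum>i<N+1. v i * A i j)"
  unfolding vec_mat_def by simp

lemma vec_mat_sum: "sum_list (vec_mat N m v A) = (\<Sum>j<m. \<Sum>i<N+1. v i * A i j)"
  unfolding vec_mat_def by (simp add: sum_list_map_eq_sum_count2 atLeast0LessThan[symmetric] sum_set_upt_conv_sum_list_nat[symmetric])

lemma total_eq:
  assumes "zero_one_matrix (N+1) m A"
  shows "sum_list (vec_mat N m v A) = (\<Sum>i<N+1. v i * row_norm m A i)"
proof -
  have "sum_list (vec_mat N m v A) = (\<Sum>j<m. \<Sum>i<N+1. v i * A i j)" by (rule vec_mat_sum)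
  also have "\<dots> = (\<Sum>i<N+1. v i * (\<Sum>j<m. \<bar>A i j\<bar>))"
  proof -
    have "\<And>i j. i < N+1 \<Longrightarrow> j < m \<Longrightarrow> \<bar>A i j\<bar> = A i j"
      using assms unfolding zero_one_matrix_def by fastforce
    then have "(\<Sum>i<N+1. v i * (\<Sum>j<m. \<bar>A i j\<bar>)) = (\<Sum>i<N+1. v i * (\<Sum>j<m. A i j))"
      by (intro sum.cong refl) simp
    then show ?thesis by (simp add: sum_distrib_left sum.swap[of _ "{..<m}"])
  qed
  finally show ?thesis unfolding row_norm_def .
qed

lemma indic_sum:
  fixes g :: "nat \<Rightarrow> real"
  assumes "S \<subseteq> {..<m}"
  shows "(\<Sum>j<m. (if j \<in> S then 1 else 0) * g j) = (\<Sum>j\<in>S. g j)"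
proof -
  have "(\<Sum>j<m. (if j \<in> S then 1 else 0) * g j) = (\<Sum>j<m. if j \<in> S then g j else 0)"
    by (intro sum.cong) auto
  also have "\<dots> = (\<Sum>j\<in>{j\<in>{..<m}. j \<in> S}. g j)" by (rule sum.inter_filter[symmetric]) simp
  also have "{j\<in>{..<m}. j \<in> S} = S" using assms by auto
  finally show ?thesis .
qed

theorem theorem3:
  fixes N mL mR :: nat and L R :: "nat \<Rightarrow> nat \<Rightarrow> real"
  assumes "in_P N mL mR L R"
    and "centered N mL mR L R"
    and "\<exists>f. dominance_map N mL L R f"
  shows "\<forall>v::nat \<Rightarrow> real. (\<forall>i<N+1. v i \<ge> 0) \<longrightarrow>
           majorized (vec_mat N mL v L) (vec_mat N mR v R)"
proof (intro allI impI)
  fix v :: "nat \<Rightarrow> real"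
  assume vpos: "\<forall>i<N+1. v i \<ge> 0"
  define m where "m = mL"
  have mR: "mR = m" using assms(2) unfolding centered_def m_def by simp
  obtain f where f: "dominance_map N m L R f" using assms(3) unfolding m_def by blast
  have zL: "zero_one_matrix (N+1) m L" and zR: "zero_one_matrix (N+1) m R"
    using assms(1) mR unfolding in_P_def m_def by auto
  have bal: "\<forall>i<N+1. row_norm m L i = row_norm m R i"
    using assms(2) mR unfolding centered_def balanced_def m_def by auto
  define xs where "xs = vec_mat N m v L"
  define ys where "ys = vec_mat N m v R"
  have lx: "length xs = m" and ly: "length ys = m" unfolding xs_def ys_def by (simp_all add: vec_mat_len)
  have tot: "sum_list xs = sum_list ys"
    unfolding xs_def ys_def using total_eq[OF zL] total_eq[OF zR] bal by simp
  have pre: "sum_list (take k (rev (sort xs))) \<le> sum_list (take k (rev (sort ys)))"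
    if k: "k \<le> m" for k
  proof -
    obtain S where S: "S \<subseteq> {..<m}" "card S = k" "sum_list (take k (rev (sort xs))) = (\<Sum>j\<in>S. xs!j)"
      using topk_attained[of k xs] k lx by auto
    define u :: "nat \<Rightarrow> real" where "u = (\<lambda>j. if j \<in> S then 1 else 0)"
    have ub: "u \<in> binvecs m" unfolding u_def binvecs_def using S(1) by auto
    define w where "w = f u"
    have wb: "w \<in> binvecs m" and nrm: "vnorm m u = vnorm m w"
      and dom: "\<forall>i<N+1. mat_vec m L u i \<le> mat_vec m R w i"
      using f ub unfolding dominance_map_def w_def by auto
    define S' where "S' = {j\<in>{..<m}. w j = 1}"
    have S'sub: "S' \<subseteq> {..<m}" unfolding S'_def by auto
    have wS': "\<And>j. j < m \<Longrightarrow> w j = (if j \<in> S' then 1 else 0)"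
      using wb unfolding binvecs_def S'_def by auto
    have "vnorm m u = real (card S)"
      unfolding vnorm_def using indic_sum[OF S(1), of "\<lambda>_. 1"] by (simp add: u_def)
    moreover have "vnorm m w = real (card S')"
    proof -
      have "vnorm m w = (\<Sum>j<m. (if j \<in> S' then 1 else 0) * 1)"
        unfolding vnorm_def by (intro sum.cong) (auto simp: wS')
      then show ?thesis using indic_sum[OF S'sub, of "\<lambda>_. 1"] by simp
    qed
    ultimately have cS': "card S' = k" using nrm S(2) by simp
    have "(\<Sum>j\<in>S. xs!j) = (\<Sum>j<m. u j * (\<Sum>i<N+1. v i * L i j))"
      using indic_sum[OF S(1), of "\<lambda>j. xs!j"] unfolding u_def xs_def
      by (simp add: vec_mat_nth)
    also have "\<dots> = (\<Sum>i<N+1. v i * mat_vec m L u i)" by (rule swap_lemma)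
    also have "\<dots> \<le> (\<Sum>i<N+1. v i * mat_vec m R w i)"
      using dom vpos by (intro sum_mono mult_left_mono) auto
    also have "\<dots> = (\<Sum>j<m. w j * (\<Sum>i<N+1. v i * R i j))" by (rule swap_lemma[symmetric])
    also have "\<dots> = (\<Sum>j<m. (if j \<in> S' then 1 else 0) * ys!j)"
      unfolding ys_def by (intro sum.cong) (auto simp: wS' vec_mat_nth)
    also have "\<dots> = (\<Sum>j\<in>S'. ys!j)" by (rule indic_sum[OF S'sub])
    also have "\<dots> \<le> sum_list (take k (rev (sort ys)))"
      using topk_ge[of S' ys k] S'sub cS' ly by simp
    finally show ?thesis using S(3) by simp
  qed
  show "majorized (vec_mat N mL v L) (vec_mat N mR v R)"
    unfolding majorized_def using pre tot lx ly mR
    by (simp add: xs_def ys_def m_def)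
qed

end
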